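(* Let $n\geq 2$. Let $S$ be the semigroup with zero $0$ defined by the presentation with generators $x,y,z$ and defining relations $$xyz=x,\quad yzy=y,\quad zyz=z,$$ together with $w=0$ for each $w\in\{x^n,\ y^2,\ z^2,\ xz,\ yx,\ zx^{n-1}\}$, and let $A=S^1\{x,y\}$. Then $S$ is finite, $\mathrm{H}_{\mathcal{R}}(S)=n$ and $\mathrm{H}_{\mathcal{R}}(A)=2n-1$.
   Context: A presentation of a semigroup with zero $\langle X\mid R\rangle$ defines the quotient of the free semigroup with zero on $X$ by the congruence generated by $R$. $S^1$ denotes $S$ with an identity adjoined; $A=S^1\{x,y\}$ is the left ideal generated by $x,y$. Green's preorder: $a\leq_{\mathcal{R}} b$ iff $aS^1\subseteq bS^1$; $\mathcal{R}$ is the associated equivalence; the $\mathcal{R}$-height $\mathrm{H}_{\mathcal{R}}$ of a semigroup is the supremum of cardinalities of chains in its poset of $\mathcal{R}$-classes; for $A$ it is computed in the semigroup $A$ itself. *)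

theory Defs
  imports Main "HOL-Library.Extended_Nat"
begin

text \<open>Elements of the free semigroup with zero on generators of type 'a:
  the zero, or a nonempty word (first letter, remaining letters).\<close>
datatype 'a fsz = Zero | Word 'a "'a list"

fun fmul :: "'a fsz \<Rightarrow> 'a fsz \<Rightarrow> 'a fsz" where
  "fmul (Word a u) (Word b v) = Word a (u @ b # v)"
| "fmul _ _ = Zero"

text \<open>Nonempty word given as a list (the empty list is never used).\<close>
fun wd :: "'a list \<Rightarrow> 'a fsz" where
  "wd [] = Zero"
| "wd (a # u) = Word a u"

inductive_set cong_gen :: "('a fsz \<times> 'a fsz) set \<Rightarrow> ('a fsz \<times> 'a fsz) set"
  for R :: "('a fsz \<times> 'a fsz) set" where
  base: "p \<in> R \<Longrightarrow> p \<in> cong_gen R"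
| refl: "(u, u) \<in> cong_gen R"
| sym: "(u, v) \<in> cong_gen R \<Longrightarrow> (v, u) \<in> cong_gen R"
| trans: "(u, v) \<in> cong_gen R \<Longrightarrow> (v, w) \<in> cong_gen R \<Longrightarrow> (u, w) \<in> cong_gen R"
| mulr: "(u, v) \<in> cong_gen R \<Longrightarrow> (fmul u w, fmul v w) \<in> cong_gen R"
| mull: "(u, v) \<in> cong_gen R \<Longrightarrow> (fmul w u, fmul w v) \<in> cong_gen R"

definition pres_carrier :: "('a fsz \<times> 'a fsz) set \<Rightarrow> 'a fsz set set" where
  "pres_carrier R = UNIV // cong_gen R"

definition pres_mul :: "('a fsz \<times> 'a fsz) set \<Rightarrow> 'a fsz set \<Rightarrow> 'a fsz set \<Rightarrow> 'a fsz set" where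
  "pres_mul R P Q = cong_gen R `` {fmul (SOME p. p \<in> P) (SOME q. q \<in> Q)}"

definition pres_elem :: "('a fsz \<times> 'a fsz) set \<Rightarrow> 'a fsz \<Rightarrow> 'a fsz set" where
  "pres_elem R w = cong_gen R `` {w}"

text \<open>a \<le>_R b iff a S^1 \<subseteq> b S^1, i.e. a \<in> b S^1.\<close>
definition R_le :: "'s set \<Rightarrow> ('s \<Rightarrow> 's \<Rightarrow> 's) \<Rightarrow> 's \<Rightarrow> 's \<Rightarrow> bool" where
  "R_le C m a b \<longleftrightarrow> a = b \<or> (\<exists>c\<in>C. a = m b c)"

definition R_rel :: "'s set \<Rightarrow> ('s \<Rightarrow> 's \<Rightarrow> 's) \<Rightarrow> ('s \<times> 's) set" where
  "R_rel C m = {(a, b). a \<in> C \<and> b \<in> C \<and> R_le C m a b \<and> R_le C m b a}"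

definition R_classes :: "'s set \<Rightarrow> ('s \<Rightarrow> 's \<Rightarrow> 's) \<Rightarrow> 's set set" where
  "R_classes C m = C // R_rel C m"

definition R_class_le :: "'s set \<Rightarrow> ('s \<Rightarrow> 's \<Rightarrow> 's) \<Rightarrow> 's set \<Rightarrow> 's set \<Rightarrow> bool" where
  "R_class_le C m K L \<longleftrightarrow> (\<exists>a\<in>K. \<exists>b\<in>L. R_le C m a b)"

text \<open>R-height: supremum of cardinalities of chains of R-classes (an infinite chain
  contains finite chains of every size, so restricting to finite chains gives the same
  supremum in enat).\<close>
definition R_height :: "'s set \<Rightarrow> ('s \<Rightarrow> 's \<Rightarrow> 's) \<Rightarrow> enat" where
  "R_height C m = Sup {enat (card Ks) | Ks. Ks \<subseteq> R_classes C m \<and> finite Ks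
                        \<and> Complete_Partial_Order.chain (R_class_le C m) Ks}"

datatype gen = X | Y | Z

definition rels :: "nat \<Rightarrow> (gen fsz \<times> gen fsz) set" where
  "rels n = {(wd [X,Y,Z], wd [X]), (wd [Y,Z,Y], wd [Y]), (wd [Z,Y,Z], wd [Z]),
             (wd (replicate n X), Zero), (wd [Y,Y], Zero), (wd [Z,Z], Zero),
             (wd [X,Z], Zero), (wd [Y,X], Zero), (wd (Z # replicate (n - 1) X), Zero)}"

definition left_ideal_xy :: "nat \<Rightarrow> gen fsz set set" where
  "left_ideal_xy n = (let R = rels n; gx = pres_elem R (wd [X]); gy = pres_elem R (wd [Y])
     in {gx, gy} \<union> {pres_mul R s g | s g. s \<in> pres_carrier R \<and> g \<in> {gx, gy}})"

end

theory Submission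
  imports Defs
begin

datatype pre = PN | PYZ | PZ
type_synonym st = "pre \<times> nat \<times> bool"

definition bnd :: "nat \<Rightarrow> pre \<Rightarrow> nat" where "bnd n P = (if P = PN then n - 1 else n - 2)"

fun act :: "nat \<Rightarrow> st \<Rightarrow> gen \<Rightarrow> st option" where
  "act n (P,b,False) X = (if b+1 \<le> bnd n P then Some (P,b+1,False) else None)"
| "act n (P,b,False) Y = (if P = PYZ \<and> b = 0 then Some (PN,0,True) else Some (P,b,True))"
| "act n (P,b,False) Z = (if P = PN \<and> b = 0 then Some (PZ,0,False) else None)"
| "act n (P,b,True) X = None"
| "act n (P,b,True) Y = None"
| "act n (P,b,True) Z = (if 0 < b then Some (P,b,False) else if P = PN then Some (PYZ,0,False)
      else if P = PZ then Some (PZ,0,False) else None)"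

fun actO :: "nat \<Rightarrow> st option \<Rightarrow> gen \<Rightarrow> st option" where
  "actO n None c = None"
| "actO n (Some s) c = act n s c"

definition runl :: "nat \<Rightarrow> st option \<Rightarrow> gen list \<Rightarrow> st option" where
  "runl n s w = foldl (actO n) s w"

fun runw :: "nat \<Rightarrow> st option \<Rightarrow> gen fsz \<Rightarrow> st option" where
  "runw n s Zero = None"
| "runw n s (Word a u) = runl n s (a # u)"

definition E :: st where "E = (PN, 0, False)"

definition ev :: "nat \<Rightarrow> gen fsz \<Rightarrow> st option" where "ev n u = runw n (Some E) u"

fun pre_w :: "pre \<Rightarrow> gen list" where
  "pre_w PN = []" | "pre_w PYZ = [Y,Z]" | "pre_w PZ = [Z]"

fun word :: "st \<Rightarrow> gen list" where
  "word (P,b,y) = pre_w P @ replicate b X @ (if y then [Y] else [])"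

fun rep :: "st option \<Rightarrow> gen fsz" where
  "rep None = Zero" | "rep (Some s) = wd (word s)"

fun wfs :: "nat \<Rightarrow> st \<Rightarrow> bool" where
  "wfs n (P,b,y) = (b \<le> bnd n P \<and> \<not> (P = PYZ \<and> b = 0 \<and> y))"

lemma runl_None[simp]: "runl n None w = None"
  unfolding runl_def by (induction w) auto

lemma runl_Nil[simp]: "runl n s [] = s"
  unfolding runl_def by simp

lemma runl_Cons[simp]: "runl n s (c # w) = runl n (actO n s c) w"
  unfolding runl_def by simp

lemma runl_append: "runl n s (u @ v) = runl n (runl n s u) v"
  unfolding runl_def by simp

lemma runw_None[simp]: "runw n None u = None"
  by (cases u) auto

lemma runw_wd: "w \<noteq> [] \<Longrightarrow> runw n s (wd w) = runl n s w"
  by (cases w) auto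

lemma runw_fmul: "runw n s (fmul u v) = runw n (runw n s u) v"
  by (cases u; cases v) (auto simp: runl_append[symmetric] simp del: runl_Cons)

lemma fmul_assoc: "fmul (fmul u v) w = fmul u (fmul v w)"
  by (cases u; cases v; cases w) auto

lemma fmul_wd: "a \<noteq> [] \<Longrightarrow> b \<noteq> [] \<Longrightarrow> fmul (wd a) (wd b) = wd (a @ b)"
  by (cases a; cases b) auto

lemma runX: "runl n (Some (P,b,False)) (replicate (Suc k) X) =
   (if b + Suc k \<le> bnd n P then Some (P,b+Suc k,False) else None)"
proof (induction k arbitrary: b)
  case 0
  then show ?case by simp
next
  case (Suc k)
  have "runl n (Some (P,b,False)) (replicate (Suc (Suc k)) X)
     = runl n (act n (P,b,False) X) (replicate (Suc k) X)" by simp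
  then show ?case using Suc[of "Suc b"] by auto
qed


lemma runX_None: "b \<le> n - 1 \<Longrightarrow> runl n (Some (P,b,True)) (replicate (Suc k) X) = None"
  by (simp del: replicate_Suc add: replicate_Suc[of k] )

lemma bnd_le: "bnd n P \<le> n - 1" by (auto simp: bnd_def)

lemma inv_xn: assumes "2 \<le> n" shows "runw n s (wd (replicate n X)) = None"
proof -
  obtain k where k: "n = Suc k" using assms by (cases n) auto
  show ?thesis
  proof (cases s)
    case (Some st)
    obtain P b y where st: "st = (P,b,y)" by (cases st) auto
    show ?thesis
    proof (cases y)
      case True then show ?thesis using Some st k by simp
    next
      case False then show ?thesis using Some st k runX[of n P b k] bnd_le[of n P]
        by (simp del: replicate_Suc add: replicate_Suc[of k])
    qed
  qed simp
qed

lemma inv_zx: assumes "2 \<le> n" shows "runw n s (wd (Z # replicate (n - 1) X)) = None"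
proof -
  have "n - 1 = Suc (n - 2)" using assms by arith
  then obtain k where k: "n - 1 = Suc k" by blast
  show ?thesis
  proof (cases s)
    case (Some st)
    obtain P b y where st: "st = (P,b,y)" by (cases st) auto
    have a: "act n (P,b,y) Z = None \<or> (\<exists>P' b'. act n (P,b,y) Z = Some (P',b',False) \<and> (P' = PN \<longrightarrow> b' \<ge> 1))"
      by (cases y) auto
    have b: "runl n (Some (P',b',False)) (replicate (Suc k) X) = None" if "P' = PN \<longrightarrow> b' \<ge> 1" for P' b'
      using runX[of n P' b' k] that k by (auto simp: bnd_def)
    have "runw n s (wd (Z # replicate (n - 1) X)) = runl n (act n (P,b,y) Z) (replicate (Suc k) X)"
      unfolding k using Some st by simp
    also have "\<dots> = None" using a b by (elim disjE exE conjE) simp_all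
    finally show ?thesis .
  qed simp
qed

lemma inv_xyz: "runl n s [X,Y,Z] = runl n s [X]"
proof (cases s)
  case (Some st)
  obtain P b y where st: "st = (P,b,y)" by (cases st) auto
  show ?thesis using Some st by (cases y; cases P) auto
qed simp

lemma inv_yzy: "runl n s [Y,Z,Y] = runl n s [Y]"
proof (cases s)
  case (Some st)
  obtain P b y where st: "st = (P,b,y)" by (cases st) auto
  show ?thesis using Some st by (cases y; cases P) auto
qed simp

lemma inv_zyz: "runl n s [Z,Y,Z] = runl n s [Z]"
proof (cases s)
  case (Some st)
  obtain P b y where st: "st = (P,b,y)" by (cases st) auto
  show ?thesis using Some st by (cases y; cases P) auto
qed simp

lemma inv_zero2: "c \<in> {[Y,Y],[Z,Z],[X,Z],[Y,X]} \<Longrightarrow> runl n s c = None"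
proof (cases s)
  case (Some st)
  assume c: "c \<in> {[Y,Y],[Z,Z],[X,Z],[Y,X]}"
  obtain P b y where st: "st = (P,b,y)" by (cases st) auto
  show ?thesis using Some st c by (cases y) auto
qed simp

lemma inv_rel: assumes "2 \<le> n" "(l, r) \<in> rels n" shows "runw n s l = runw n s r"
  using assms(2) unfolding rels_def
  apply (elim insertE emptyE)
  using inv_xn[OF assms(1)] inv_zx[OF assms(1)] inv_xyz inv_yzy inv_zyz
    inv_zero2[of "[Y,Y]"] inv_zero2[of "[Z,Z]"] inv_zero2[of "[X,Z]"] inv_zero2[of "[Y,X]"]
  by (simp_all del: runl_Cons)

definition lm :: "gen list \<Rightarrow> gen fsz \<Rightarrow> gen fsz" where
  "lm u p = (if u = [] then p else fmul (wd u) p)"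
definition rm :: "gen fsz \<Rightarrow> gen list \<Rightarrow> gen fsz" where
  "rm p v = (if v = [] then p else fmul p (wd v))"

lemma lm_rm_cong: "(p, q) \<in> cong_gen R \<Longrightarrow> (lm u (rm p v), lm u (rm q v)) \<in> cong_gen R"
  unfolding lm_def rm_def by (auto intro: cong_gen.mulr cong_gen.mull)

lemma lm_rm_wd: "l \<noteq> [] \<Longrightarrow> lm u (rm (wd l) v) = wd (u @ l @ v)"
  unfolding lm_def rm_def by (auto simp: fmul_wd)

lemma lm_rm_Zero[simp]: "lm u (rm Zero v) = Zero"
  unfolding lm_def rm_def by (cases u) auto

lemma use_rel: "(wd ll, r) \<in> R \<Longrightarrow> ll \<noteq> [] \<Longrightarrow> w = u @ ll @ v \<Longrightarrow> t = lm u (rm r v)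
   \<Longrightarrow> (wd w, t) \<in> cong_gen R"
  using lm_rm_cong[OF cong_gen.base, of "wd ll" r R u v] lm_rm_wd[of ll u v] by simp

lemma rep_ne: "s \<noteq> E \<Longrightarrow> word s \<noteq> []"
proof -
  assume a: "s \<noteq> E"
  obtain P b y where "s = (P,b,y)" by (cases s) auto
  then show ?thesis using a by (cases P) (auto simp: E_def)
qed

lemma step_cong:
  assumes n2: "2 \<le> n" and w: "wfs n s" and ne: "s \<noteq> E"
  shows "(wd (word s @ [c]), rep (act n s c)) \<in> cong_gen (rels n)"
proof -
  obtain P b y where st: "s = (P,b,y)" by (cases s) auto
  have rxn: "(wd (replicate n X), Zero) \<in> rels n" by (simp add: rels_def)
  have rzx: "(wd (Z # replicate (n-1) X), Zero) \<in> rels n" by (simp add: rels_def)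
  have rxyz: "(wd [X,Y,Z], wd [X]) \<in> rels n" by (simp add: rels_def)
  have ryzy: "(wd [Y,Z,Y], wd [Y]) \<in> rels n" by (simp add: rels_def)
  have rzyz: "(wd [Z,Y,Z], wd [Z]) \<in> rels n" by (simp add: rels_def)
  have ryy: "(wd [Y,Y], Zero) \<in> rels n" by (simp add: rels_def)
  have rzz: "(wd [Z,Z], Zero) \<in> rels n" by (simp add: rels_def)
  have rxz: "(wd [X,Z], Zero) \<in> rels n" by (simp add: rels_def)
  have ryx: "(wd [Y,X], Zero) \<in> rels n" by (simp add: rels_def)
  have e1: "n = Suc (n - Suc 0)" using n2 by arith
  have e2: "n - 1 = Suc (n - 2)" using n2 by arith
  have n0: "0 < n" using n2 by arith
  have rn: "X # replicate (n - Suc 0) X = replicate n X"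
    by (metis e1 replicate_Suc)
  have rn1: "X # replicate (n - 2) X = replicate (n - 1) X"
    by (metis e2 replicate_Suc)
  show ?thesis
  proof (cases y)
    case False
    show ?thesis
    proof (cases c)
      case X
      show ?thesis
      proof (cases "b + 1 \<le> bnd n P")
        case True
        then show ?thesis using st False X by (simp add: replicate_append_same cong_gen.refl)
      next
        case nb: False
        with w st have bb: "b = bnd n P" by simp
        show ?thesis
        proof (cases P)
          case PN
          then show ?thesis using st False X nb bb
            by (intro use_rel[OF rxn, where u="[]" and v="[]"]) (auto simp: bnd_def rn n0 replicate_append_same)
        next
          case PZ
          then show ?thesis using st False X nb bb
            by (intro use_rel[OF rzx, where u="[]" and v="[]"]) (auto simp: bnd_def rn1 n2 replicate_append_same)
        next
          case PYZ
          then show ?thesis using st False X nb bb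
            by (intro use_rel[OF rzx, where u="[Y]" and v="[]"]) (auto simp: bnd_def rn1 n2 replicate_append_same)
        qed
      qed
    next
      case Y
      show ?thesis
      proof (cases "P = PYZ \<and> b = 0")
        case True
        then show ?thesis using st False Y
          by (intro use_rel[OF ryzy, where u="[]" and v="[]"]) (auto simp: lm_def rm_def)
      next
        case f2: False
        then show ?thesis using st False Y by (auto intro: cong_gen.refl)
      qed
    next
      case Z
      show ?thesis
      proof (cases b)
        case 0
        show ?thesis
        proof (cases P)
          case PN then show ?thesis using ne st 0 False by (simp add: E_def)
        next
          case PZ then show ?thesis using st 0 False Z
            by (intro use_rel[OF rzz, where u="[]" and v="[]"]) auto
        next
          case PYZ then show ?thesis using st 0 False Z
            by (intro use_rel[OF rzz, where u="[Y]" and v="[]"]) auto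
        qed
      next
        case (Suc k)
        then show ?thesis using st False Z
          by (intro use_rel[OF rxz, where u="pre_w P @ replicate k X" and v="[]"])
             (auto simp: replicate_append_same)
      qed
    qed
  next
    case True
    show ?thesis
    proof (cases c)
      case X then show ?thesis using st True
        by (intro use_rel[OF ryx, where u="pre_w P @ replicate b X" and v="[]"]) auto
    next
      case Y then show ?thesis using st True
        by (intro use_rel[OF ryy, where u="pre_w P @ replicate b X" and v="[]"]) auto
    next
      case Z
      show ?thesis
      proof (cases b)
        case 0
        show ?thesis
        proof (cases P)
          case PN then show ?thesis using st 0 True Z by (simp add: cong_gen.refl)
        next
          case PZ then show ?thesis using st 0 True Z
            by (intro use_rel[OF rzyz, where u="[]" and v="[]"]) (auto simp: lm_def rm_def)
        next
          case PYZ then show ?thesis using st 0 True w by simp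
        qed
      next
        case (Suc k)
        have "lm (pre_w P @ replicate k X) (rm (wd [X]) []) = wd (pre_w P @ replicate (Suc k) X)"
          by (subst lm_rm_wd) (auto simp: replicate_append_same)
        then show ?thesis using st True Z Suc
          by (intro use_rel[OF rxyz, where u="pre_w P @ replicate k X" and v="[]"])
             (auto simp: replicate_append_same)
      qed
    qed
  qed
qed

lemma R_rel_equiv:
  assumes tr: "\<And>a b c. a\<in>C \<Longrightarrow> b\<in>C \<Longrightarrow> c\<in>C \<Longrightarrow> R_le C m a b \<Longrightarrow> R_le C m b c \<Longrightarrow> R_le C m a c"
  shows "equiv C (R_rel C m)"
  unfolding equiv_def refl_on_def sym_def trans_def R_rel_def
  using tr by (auto simp: R_le_def)

lemma R_height_le:
  fixes C :: "'s set" and h :: "'s \<Rightarrow> nat"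
  assumes tr: "\<And>a b c. a\<in>C \<Longrightarrow> b\<in>C \<Longrightarrow> c\<in>C \<Longrightarrow> R_le C m a b \<Longrightarrow> R_le C m b c \<Longrightarrow> R_le C m a c"
   and hb: "\<And>a. a\<in>C \<Longrightarrow> h a < N"
   and hm: "\<And>a b. a\<in>C \<Longrightarrow> b\<in>C \<Longrightarrow> R_le C m a b \<Longrightarrow> h a \<le> h b"
   and he: "\<And>a b. a\<in>C \<Longrightarrow> b\<in>C \<Longrightarrow> R_le C m a b \<Longrightarrow> h a = h b \<Longrightarrow> R_le C m b a"
  shows "R_height C m \<le> enat N"
proof -
  let ?r = "R_rel C m"
  have eq: "equiv C ?r" by (rule R_rel_equiv) (rule tr)
  define g where "g K = h (SOME a. a \<in> K)" for K
  have gK: "g K = h a" if K: "K \<in> R_classes C m" and a: "a \<in> K" for K a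
  proof -
    obtain x where x: "x \<in> C" "K = ?r``{x}" using K unfolding R_classes_def by (auto elim: quotientE)
    have s: "(SOME a. a \<in> K) \<in> K" using a by (rule someI)
    have "(a, SOME a. a \<in> K) \<in> ?r"
      using x a s eq unfolding equiv_def sym_def trans_def by blast
    then show ?thesis unfolding g_def R_rel_def using hm by (auto intro: antisym)
  qed
  show ?thesis
    unfolding R_height_def
  proof (rule Sup_least, clarify)
    fix Ks assume Ks: "Ks \<subseteq> R_classes C m" "finite Ks" "Complete_Partial_Order.chain (R_class_le C m) Ks"
    have sub: "K \<subseteq> C" if "K \<in> Ks" for K
      using in_quotient_imp_subset[OF eq] Ks(1) that unfolding R_classes_def by blast
    have inj: "inj_on g Ks"
    proof (rule inj_onI)
      fix K L assume KL: "K \<in> Ks" "L \<in> Ks" "g K = g L"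
      have "\<exists>a\<in>K. \<exists>b\<in>L. R_le C m a b \<and> R_le C m b a"
      proof -
        have "R_class_le C m K L \<or> R_class_le C m L K" using Ks(3) KL unfolding chain_def by blast
        then obtain a b where ab: "(a \<in> K \<and> b \<in> L) \<or> (a \<in> L \<and> b \<in> K)" "R_le C m a b"
          unfolding R_class_le_def by blast
        have "h a = h b" using ab gK KL Ks(1) by (metis subsetD)
        moreover have "a \<in> C" "b \<in> C" using ab sub KL by blast+
        ultimately have "R_le C m b a" using he ab by blast
        then show ?thesis using ab by blast
      qed
      then obtain a b where "a \<in> K" "b \<in> L" "(a, b) \<in> ?r"
        using sub KL unfolding R_rel_def by blast
      then show "K = L" using quotient_eq_iff[OF eq] KL Ks(1) unfolding R_classes_def by blast
    qed
    have "g ` Ks \<subseteq> {..<N}"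
    proof
      fix v assume "v \<in> g ` Ks"
      then obtain K where K: "K \<in> Ks" "v = g K" by blast
      have "K \<noteq> {}" using K Ks(1) eq unfolding R_classes_def
        by (metis in_mono equiv_class_self quotientE empty_iff)
      then obtain a where "a \<in> K" by blast
      then have "a \<in> C" "K \<in> R_classes C m" using sub[of K] K Ks(1) by auto
      then show "v \<in> {..<N}" using K gK[of K a] hb[of a] \<open>a \<in> K\<close> by auto
    qed
    then have "card (g ` Ks) \<le> N" by (metis card_lessThan card_mono finite_lessThan)
    then show "enat (card Ks) \<le> enat N" using card_image[OF inj] by simp
  qed
qed

lemma R_height_ge:
  fixes C :: "'s set" and h :: "'s \<Rightarrow> nat"
  assumes tr: "\<And>a b c. a\<in>C \<Longrightarrow> b\<in>C \<Longrightarrow> c\<in>C \<Longrightarrow> R_le C m a b \<Longrightarrow> R_le C m b c \<Longrightarrow> R_le C m a c"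
   and hm: "\<And>a b. a\<in>C \<Longrightarrow> b\<in>C \<Longrightarrow> R_le C m a b \<Longrightarrow> h a \<le> h b"
   and fC: "\<And>k. k \<in> {1..K} \<Longrightarrow> f k \<in> C"
   and adj: "\<And>j. 1 \<le> j \<Longrightarrow> j < K \<Longrightarrow> R_le C m (f (Suc j)) (f j)"
   and inj: "inj_on (\<lambda>k. h (f k)) {1..K}"
  shows "enat K \<le> R_height C m"
proof -
  let ?r = "R_rel C m"
  have eq: "equiv C ?r" by (rule R_rel_equiv) (rule tr)
  have ch: "R_le C m (f j) (f i)" if "i \<in> {1..K}" "j \<in> {1..K}" "i \<le> j" for i j
    using that(3,2)
  proof (induction j rule: dec_induct)
    case base then show ?case by (simp add: R_le_def)
  next
    case (step k)
    then have "R_le C m (f (Suc k)) (f k)" using adj that(1) by auto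
    then show ?case using step tr[of "f (Suc k)" "f k" "f i"] fC that by auto
  qed
  define Ks where "Ks = (\<lambda>k. ?r``{f k}) ` {1..K}"
  have injK: "inj_on (\<lambda>k. ?r``{f k}) {1..K}"
  proof (rule inj_onI)
    fix i j assume ij: "i \<in> {1..K}" "j \<in> {1..K}" "?r``{f i} = ?r``{f j}"
    then have "(f i, f j) \<in> ?r" using eq_equiv_class_iff[OF eq] fC by blast
    then have "h (f i) = h (f j)" using hm fC ij unfolding R_rel_def by (auto intro: antisym)
    then show "i = j" using inj ij unfolding inj_on_def by blast
  qed
  have cK: "card Ks = K" unfolding Ks_def using card_image[OF injK] by simp
  have sub: "Ks \<subseteq> R_classes C m" unfolding Ks_def R_classes_def using fC by (auto intro: quotientI)
  have chn: "Complete_Partial_Order.chain (R_class_le C m) Ks"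
    unfolding chain_def
  proof (intro ballI)
    fix A B assume "A \<in> Ks" "B \<in> Ks"
    then obtain i j where ij: "i \<in> {1..K}" "j \<in> {1..K}" "A = ?r``{f i}" "B = ?r``{f j}"
      unfolding Ks_def by blast
    have mem: "f i \<in> A" "f j \<in> B" using ij equiv_class_self[OF eq] fC by auto
    show "R_class_le C m A B \<or> R_class_le C m B A"
    proof (cases "i \<le> j")
      case True then show ?thesis using ch[OF ij(1,2)] mem unfolding R_class_le_def by blast
    next
      case False then show ?thesis using ch[OF ij(2,1)] mem unfolding R_class_le_def by auto
    qed
  qed
  have "enat K \<in> {enat (card Ks) | Ks. Ks \<subseteq> R_classes C m \<and> finite Ks
                        \<and> Complete_Partial_Order.chain (R_class_le C m) Ks}"
  proof -
    have "finite Ks" unfolding Ks_def by simp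
    then show ?thesis using cK sub chn by (intro CollectI exI[of _ Ks]) auto
  qed
  then show ?thesis unfolding R_height_def by (rule Sup_upper)
qed

definition reach :: "nat \<Rightarrow> st option \<Rightarrow> bool" where
  "reach n t = (t = None \<or> (\<exists>s. t = Some s \<and> wfs n s \<and> s \<noteq> E))"

lemma act_wf: "wfs n s \<Longrightarrow> act n s c = Some s' \<Longrightarrow> wfs n s' \<and> s' \<noteq> E"
proof -
  assume a: "wfs n s" "act n s c = Some s'"
  obtain P b y where st: "s = (P,b,y)" by (cases s) auto
  show ?thesis using a st by (cases y; cases c; cases P) (auto simp: E_def bnd_def split: if_splits)
qed

lemma reach_act: "reach n t \<Longrightarrow> reach n (actO n t c)"
proof -
  assume r: "reach n t"
  show ?thesis
  proof (cases t)
    case (Some s)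
    then have s: "wfs n s" using r unfolding reach_def by auto
    show ?thesis
    proof (cases "act n s c")
      case (Some s')
      then show ?thesis using act_wf[OF s Some] \<open>t = Some s\<close> unfolding reach_def by simp
    qed (simp add: Some reach_def)
  qed (simp add: reach_def)
qed

lemma reach_runl: "reach n t \<Longrightarrow> reach n (runl n t w)"
  by (induction w arbitrary: t) (auto intro: reach_act)

lemma wf_E: "wfs n E" by (simp add: E_def)

lemma reach_ev: "reach n (ev n u)"
proof (cases u)
  case Zero then show ?thesis by (simp add: ev_def reach_def)
next
  case (Word a us)
  have "reach n (actO n (Some E) a)" using act_wf[OF wf_E] unfolding reach_def
    by (cases "act n E a") auto
  then show ?thesis using Word reach_runl by (simp add: ev_def)
qed

lemma reach_runE: "l \<noteq> [] \<Longrightarrow> reach n (runl n (Some E) l)"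
proof (cases l)
  case (Cons a us)
  have "reach n (actO n (Some E) a)" using act_wf[OF wf_E] unfolding reach_def
    by (cases "act n E a") auto
  then show ?thesis using Cons reach_runl by simp
qed simp

lemma cong_run0: "x \<in> cong_gen (rels n) \<Longrightarrow> 2 \<le> n \<Longrightarrow> runw n s (fst x) = runw n s (snd x)"
proof (induction x arbitrary: s rule: cong_gen.induct)
  case (base p) then show ?case using inv_rel by (cases p) auto
next
  case (mulr u v w) then show ?case by (simp add: runw_fmul)
next
  case (mull u v w) then show ?case by (simp add: runw_fmul)
qed auto

lemma cong_run: "(u, v) \<in> cong_gen (rels n) \<Longrightarrow> 2 \<le> n \<Longrightarrow> runw n s u = runw n s v"
  using cong_run0[of "(u,v)"] by simp

lemma rep_cong_l: assumes n2: "2 \<le> n" shows "l \<noteq> [] \<Longrightarrow> (wd l, rep (runl n (Some E) l)) \<in> cong_gen (rels n)"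
proof (induction l rule: rev_induct)
  case Nil then show ?case by simp
next
  case (snoc c l')
  show ?case
  proof (cases "l' = []")
    case True
    have "1 \<le> n - 1" using n2 by arith
    then show ?thesis using True by (cases c) (auto simp: E_def bnd_def intro: cong_gen.refl)
  next
    case False
    let ?t = "runl n (Some E) l'"
    have IH: "(wd l', rep ?t) \<in> cong_gen (rels n)" using snoc False by blast
    have e1: "wd (l' @ [c]) = fmul (wd l') (wd [c])" using False fmul_wd[of l' "[c]"] by simp
    have c1: "(fmul (wd l') (wd [c]), fmul (rep ?t) (wd [c])) \<in> cong_gen (rels n)"
      using IH by (rule cong_gen.mulr)
    have r: "reach n ?t" using reach_runE False by blast
    have c2: "(fmul (rep ?t) (wd [c]), rep (runl n (Some E) (l' @ [c]))) \<in> cong_gen (rels n)"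
    proof (cases ?t)
      case None then show ?thesis by (simp add: runl_append cong_gen.refl)
    next
      case (Some s)
      then have s: "wfs n s" "s \<noteq> E" using r unfolding reach_def by auto
      have "fmul (rep ?t) (wd [c]) = wd (word s @ [c])" using Some rep_ne[OF s(2)] fmul_wd[of "word s" "[c]"] by simp
      then show ?thesis using step_cong[OF n2 s] Some by (simp add: runl_append)
    qed
    show ?thesis using e1 c1 c2 by (metis cong_gen.trans)
  qed
qed

lemma rep_cong: assumes n2: "2 \<le> n" shows "(u, rep (ev n u)) \<in> cong_gen (rels n)"
proof (cases u)
  case Zero then show ?thesis by (simp add: ev_def cong_gen.refl)
next
  case (Word a us) then show ?thesis using rep_cong_l[OF n2, of "a#us"] by (simp add: ev_def)
qed

lemma cong_iff: "2 \<le> n \<Longrightarrow> (u, v) \<in> cong_gen (rels n) \<longleftrightarrow> ev n u = ev n v"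
proof
  assume "2 \<le> n" "(u, v) \<in> cong_gen (rels n)"
  then show "ev n u = ev n v" unfolding ev_def using cong_run by blast
next
  assume n2: "2 \<le> n" and e: "ev n u = ev n v"
  show "(u, v) \<in> cong_gen (rels n)" using rep_cong[OF n2, of u] rep_cong[OF n2, of v] e
    by (metis cong_gen.sym cong_gen.trans)
qed

lemma cong_equiv: "equiv UNIV (cong_gen R)"
proof -
  have "refl_on UNIV (cong_gen R)" unfolding refl_on_def using cong_gen.refl by blast
  moreover have "sym (cong_gen R)" unfolding sym_def using cong_gen.sym by blast
  moreover have "trans (cong_gen R)" unfolding trans_def using cong_gen.trans by blast
  ultimately show ?thesis unfolding equiv_def by auto
qed

definition cls :: "nat \<Rightarrow> gen fsz \<Rightarrow> gen fsz set" where
  "cls n u = cong_gen (rels n) `` {u}"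

lemma cls_eq: "2 \<le> n \<Longrightarrow> cls n u = cls n v \<longleftrightarrow> ev n u = ev n v"
  unfolding cls_def using eq_equiv_class_iff[OF cong_equiv] cong_iff by blast

lemma carrier_eq: "pres_carrier (rels n) = range (cls n)"
  unfolding pres_carrier_def cls_def quotient_def by auto

lemma pres_mul_cls: "pres_mul (rels n) (cls n u) (cls n v) = cls n (fmul u v)"
proof -
  let ?r = "cong_gen (rels n)"
  define p0 where "p0 = (SOME p. p \<in> cls n u)"
  define q0 where "q0 = (SOME p. p \<in> cls n v)"
  have p: "p0 \<in> cls n u" unfolding p0_def by (rule someI[of _ u]) (simp add: cls_def cong_gen.refl)
  have q: "q0 \<in> cls n v" unfolding q0_def by (rule someI[of _ v]) (simp add: cls_def cong_gen.refl)
  have up: "(u, p0) \<in> ?r" using p unfolding cls_def by simp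
  have vq: "(v, q0) \<in> ?r" using q unfolding cls_def by simp
  have "(fmul u v, fmul p0 v) \<in> ?r" using up by (rule cong_gen.mulr)
  moreover have "(fmul p0 v, fmul p0 q0) \<in> ?r" using vq by (rule cong_gen.mull)
  ultimately have "(fmul u v, fmul p0 q0) \<in> ?r" by (rule cong_gen.trans)
  then have "?r``{fmul p0 q0} = ?r``{fmul u v}"
    using equiv_class_eq[OF cong_equiv] cong_gen.sym by metis
  then show ?thesis unfolding pres_mul_def cls_def p0_def q0_def .
qed

lemma ev_fmul: "ev n (fmul u v) = runw n (ev n u) v"
  unfolding ev_def by (simp add: runw_fmul)

lemma pre_cases: "P \<in> {PN, PYZ, PZ}" by (cases P) auto

lemma finite_reach: "finite {t. reach n t}"
proof -
  have "{t. reach n t} \<subseteq> insert None (Some ` ({PN,PYZ,PZ} \<times> {..n} \<times> UNIV))"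
  proof
    fix t assume "t \<in> {t. reach n t}"
    then have "t = None \<or> (\<exists>s. t = Some s \<and> wfs n s)" unfolding reach_def by auto
    then show "t \<in> insert None (Some ` ({PN,PYZ,PZ} \<times> {..n} \<times> UNIV))"
    proof (elim disjE exE conjE)
      fix s assume ts: "t = Some s" "wfs n s"
      obtain P b y where s: "s = (P,b,y)" by (cases s) auto
      have "b \<le> bnd n P" using ts s by simp
      then have "b \<le> n" using bnd_le[of n P] by linarith
      then have "s \<in> {PN,PYZ,PZ} \<times> {..n} \<times> UNIV" using s pre_cases[of P] by blast
      then show ?thesis using ts by blast
    qed simp
  qed
  then show ?thesis by (rule finite_subset) auto
qed

lemma finite_carrier: assumes n2: "2 \<le> n" shows "finite (pres_carrier (rels n))"
proof -
  have "range (cls n) \<subseteq> (\<lambda>t. cls n (rep t)) ` {t. reach n t}"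
  proof
    fix K assume "K \<in> range (cls n)"
    then obtain u where u: "K = cls n u" by blast
    have "cls n u = cls n (rep (ev n u))" unfolding cls_def
      using equiv_class_eq[OF cong_equiv rep_cong[OF n2, of u]] .
    moreover have "ev n u \<in> {t. reach n t}" using reach_ev by simp
    ultimately show "K \<in> (\<lambda>t. cls n (rep t)) ` {t. reach n t}" using u by (simp add: rev_image_eqI)
  qed
  then show ?thesis unfolding carrier_eq using finite_imageI[OF finite_reach[of n]] by (rule finite_subset)
qed

fun hS :: "nat \<Rightarrow> st option \<Rightarrow> nat" where
  "hS n None = 0"
| "hS n (Some (P,b,y)) = (if P = PN \<and> b = 0 then n - 1 else bnd n P + 1 - b)"

fun keyf :: "st \<Rightarrow> pre \<times> nat" where
  "keyf (P,b,y) = (if P = PN \<and> b = 0 \<and> y then (PYZ, 0) else (P,b))"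

lemma hS_pos: "2 \<le> n \<Longrightarrow> wfs n s \<Longrightarrow> 1 \<le> hS n (Some s)"
proof -
  assume a: "2 \<le> n" "wfs n s"
  obtain P b y where st: "s = (P,b,y)" by (cases s) auto
  show ?thesis using a st by (cases P) (auto simp: bnd_def)
qed

lemma hS_lt: "2 \<le> n \<Longrightarrow> reach n t \<Longrightarrow> hS n t < n"
proof -
  assume a: "2 \<le> n" "reach n t"
  show ?thesis
  proof (cases t)
    case (Some s)
    obtain P b y where st: "s = (P,b,y)" by (cases s) auto
    have "wfs n s" using a Some unfolding reach_def by auto
    then show ?thesis using a st Some by (cases P) (auto simp: bnd_def)
  qed (use a in simp)
qed

fun rl :: "gen \<Rightarrow> gen" where "rl X = X" | "rl Y = Z" | "rl Z = Y"

lemma step_h0: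
  assumes n2: "2 \<le> n" and w: "wfs n s" and ne: "s \<noteq> E"
  shows "hS n (act n s c) \<le> hS n (Some s) \<and>
    (hS n (act n s c) = hS n (Some s) \<longrightarrow> c \<noteq> X \<and> act n s c \<noteq> None \<and>
      keyf (the (act n s c)) = keyf s \<and> act n (the (act n s c)) (rl c) = Some s)"
proof -
  obtain P b y where st: "s = (P,b,y)" by (cases s) auto
  have pos: "1 \<le> hS n (Some s)" using hS_pos[OF n2 w] .
  have n1: "1 \<le> n - 1" using n2 by arith
  show ?thesis
  proof (cases y)
    case True
    show ?thesis
    proof (cases c)
      case X then show ?thesis using True st pos by simp
    next
      case Y then show ?thesis using True st pos by simp
    next
      case Z
      show ?thesis
      proof (cases b)
        case 0 then show ?thesis using True st pos w Z by (cases P) (simp_all add: bnd_def)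
      next
        case (Suc k) then show ?thesis using True st pos w Z by (cases P) (simp_all add: bnd_def)
      qed
    qed
  next
    case False
    show ?thesis
    proof (cases c)
      case X
      show ?thesis
      proof (cases b)
        case 0 then show ?thesis using False st pos w X ne n1 by (cases P) (simp_all add: bnd_def E_def)
      next
        case (Suc k) then show ?thesis using False st pos w X n2 by (cases P) (auto simp: bnd_def)
      qed
    next
      case Y
      show ?thesis
      proof (cases b)
        case 0 then show ?thesis using False st pos w Y ne by (cases P) (simp_all add: bnd_def E_def)
      next
        case (Suc k) then show ?thesis using False st pos w Y by (cases P) (simp_all add: bnd_def)
      qed
    next
      case Z
      show ?thesis
      proof (cases b)
        case 0 then show ?thesis using False st pos w Z ne by (cases P) (simp_all add: bnd_def E_def)
      next
        case (Suc k) then show ?thesis using False st pos w Z by (cases P) (simp_all add: bnd_def)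
      qed
    qed
  qed
qed

lemma run_h:
  assumes n2: "2 \<le> n"
  shows "reach n t \<Longrightarrow> hS n (runl n t w) \<le> hS n t \<and> (hS n (runl n t w) = hS n t \<longrightarrow>
     t = None \<or> (\<exists>s s'. t = Some s \<and> runl n t w = Some s' \<and> keyf s' = keyf s \<and>
        (\<exists>w'. runl n (Some s') w' = t)))"
proof (induction w arbitrary: t)
  case Nil
  then show ?case by (cases t) (auto intro: exI[of _ "[]"])
next
  case (Cons c w)
  show ?case
  proof (cases t)
    case None then show ?thesis by simp
  next
    case (Some s)
    then have s: "wfs n s" "s \<noteq> E" using Cons.prems unfolding reach_def by auto
    let ?t1 = "act n s c"
    have r1: "reach n ?t1" using reach_act[OF Cons.prems, of c] Some by simp
    have IH: "hS n (runl n ?t1 w) \<le> hS n ?t1 \<and> (hS n (runl n ?t1 w) = hS n ?t1 \<longrightarrow>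
     ?t1 = None \<or> (\<exists>s s'. ?t1 = Some s \<and> runl n ?t1 w = Some s' \<and> keyf s' = keyf s \<and>
        (\<exists>w'. runl n (Some s') w' = ?t1)))" using Cons.IH[OF r1] .
    have st: "hS n ?t1 \<le> hS n (Some s) \<and>
    (hS n ?t1 = hS n (Some s) \<longrightarrow> c \<noteq> X \<and> ?t1 \<noteq> None \<and>
      keyf (the ?t1) = keyf s \<and> act n (the ?t1) (rl c) = Some s)" using step_h0[OF n2 s] .
    have eqr: "runl n t (c # w) = runl n ?t1 w" using Some by simp
    have a1: "hS n (runl n ?t1 w) \<le> hS n ?t1" using IH by blast
    have a2: "hS n ?t1 \<le> hS n (Some s)" using st by blast
    have le: "hS n (runl n t (c # w)) \<le> hS n t" using a1 a2 eqr Some by simp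
    moreover have "t = None \<or> (\<exists>s s'. t = Some s \<and> runl n t (c # w) = Some s' \<and> keyf s' = keyf s \<and>
        (\<exists>w'. runl n (Some s') w' = t))" if eq: "hS n (runl n t (c # w)) = hS n t"
    proof -
      have e1: "hS n ?t1 = hS n (Some s)" using eq a1 a2 eqr Some by simp
      then obtain s1 where s1: "?t1 = Some s1" "keyf s1 = keyf s" "act n s1 (rl c) = Some s"
        using st by auto
      have e2: "hS n (runl n ?t1 w) = hS n ?t1" using eq a1 a2 eqr Some by simp
      then obtain s' w' where s': "runl n ?t1 w = Some s'" "keyf s' = keyf s1" "runl n (Some s') w' = ?t1"
        using IH s1 by auto
      have "runl n (Some s') (w' @ [rl c]) = Some s" using s'(3) s1 by (simp add: runl_append)
      then show ?thesis using s' s1 Some eqr by auto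
    qed
    ultimately show ?thesis by blast
  qed
qed

lemma runw_h:
  assumes n2: "2 \<le> n" and r: "reach n t"
  shows "hS n (runw n t w) \<le> hS n t \<and> (hS n (runw n t w) = hS n t \<longrightarrow>
     t = None \<or> (\<exists>s s'. t = Some s \<and> runw n t w = Some s' \<and> keyf s' = keyf s \<and>
        (\<exists>w'. runl n (Some s') w' = t)))"
proof (cases w)
  case Zero
  show ?thesis
  proof (cases t)
    case (Some s)
    then have "1 \<le> hS n t" using hS_pos[OF n2] r unfolding reach_def by auto
    then show ?thesis using Zero by simp
  qed simp
next
  case (Word a us)
  then show ?thesis using run_h[OF n2 r, of "a # us"] by simp
qed

definition Phi :: "nat \<Rightarrow> gen fsz set \<Rightarrow> st option" where
  "Phi n K = ev n (SOME u. u \<in> K)"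

lemma Phi_cls: assumes n2: "2 \<le> n" shows "Phi n (cls n u) = ev n u"
proof -
  have "(SOME p. p \<in> cls n u) \<in> cls n u" by (rule someI[of _ u]) (simp add: cls_def cong_gen.refl)
  then have "(u, SOME p. p \<in> cls n u) \<in> cong_gen (rels n)" unfolding cls_def by simp
  then show ?thesis unfolding Phi_def using cong_iff[OF n2] by simp
qed

lemma R_le_S: assumes n2: "2 \<le> n"
  shows "R_le (pres_carrier (rels n)) (pres_mul (rels n)) (cls n u) (cls n v) \<longleftrightarrow>
     (ev n u = ev n v \<or> (\<exists>w. ev n u = runw n (ev n v) w))"
proof -
  have "(\<exists>c\<in>pres_carrier (rels n). cls n u = pres_mul (rels n) (cls n v) c) \<longleftrightarrow>
        (\<exists>w. ev n u = runw n (ev n v) w)"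
    unfolding carrier_eq using pres_mul_cls cls_eq[OF n2] ev_fmul by auto
  then show ?thesis unfolding R_le_def using cls_eq[OF n2] by blast
qed

lemma in_carrier: "K \<in> pres_carrier (rels n) \<Longrightarrow> \<exists>u. K = cls n u"
  unfolding carrier_eq by blast

lemma S_trans: assumes n2: "2 \<le> n"
  shows "a \<in> pres_carrier (rels n) \<Longrightarrow> b \<in> pres_carrier (rels n) \<Longrightarrow> c \<in> pres_carrier (rels n) \<Longrightarrow>
    R_le (pres_carrier (rels n)) (pres_mul (rels n)) a b \<Longrightarrow>
    R_le (pres_carrier (rels n)) (pres_mul (rels n)) b c \<Longrightarrow>
    R_le (pres_carrier (rels n)) (pres_mul (rels n)) a c"
proof -
  assume "a \<in> pres_carrier (rels n)" "b \<in> pres_carrier (rels n)" "c \<in> pres_carrier (rels n)"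
  then obtain u v x where uvx: "a = cls n u" "b = cls n v" "c = cls n x" using in_carrier by metis
  assume ab: "R_le (pres_carrier (rels n)) (pres_mul (rels n)) a b"
     and bc: "R_le (pres_carrier (rels n)) (pres_mul (rels n)) b c"
  have 1: "ev n u = ev n v \<or> (\<exists>w. ev n u = runw n (ev n v) w)" using ab uvx R_le_S[OF n2] by simp
  have 2: "ev n v = ev n x \<or> (\<exists>w. ev n v = runw n (ev n x) w)" using bc uvx R_le_S[OF n2] by simp
  have "ev n u = ev n x \<or> (\<exists>w. ev n u = runw n (ev n x) w)"
    using 1 2 by (metis runw_fmul)
  then show ?thesis using uvx R_le_S[OF n2] by simp
qed

lemma S_upper: assumes n2: "2 \<le> n"
  shows "R_height (pres_carrier (rels n)) (pres_mul (rels n)) \<le> enat n"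
proof (rule R_height_le[where h = "\<lambda>K. hS n (Phi n K)"])
  fix a b c
  show "a \<in> pres_carrier (rels n) \<Longrightarrow> b \<in> pres_carrier (rels n) \<Longrightarrow> c \<in> pres_carrier (rels n) \<Longrightarrow>
    R_le (pres_carrier (rels n)) (pres_mul (rels n)) a b \<Longrightarrow>
    R_le (pres_carrier (rels n)) (pres_mul (rels n)) b c \<Longrightarrow>
    R_le (pres_carrier (rels n)) (pres_mul (rels n)) a c" by (rule S_trans[OF n2])
next
  fix a assume "a \<in> pres_carrier (rels n)"
  then obtain u where u: "a = cls n u" using in_carrier by blast
  show "hS n (Phi n a) < n" using u Phi_cls[OF n2] hS_lt[OF n2 reach_ev] by simp
next
  fix a b assume "a \<in> pres_carrier (rels n)" "b \<in> pres_carrier (rels n)"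
  then obtain u v where uv: "a = cls n u" "b = cls n v" using in_carrier by metis
  assume "R_le (pres_carrier (rels n)) (pres_mul (rels n)) a b"
  then have 1: "ev n u = ev n v \<or> (\<exists>w. ev n u = runw n (ev n v) w)" using uv R_le_S[OF n2] by simp
  then show "hS n (Phi n a) \<le> hS n (Phi n b)"
    using uv Phi_cls[OF n2] runw_h[OF n2 reach_ev] by auto
next
  fix a b assume "a \<in> pres_carrier (rels n)" "b \<in> pres_carrier (rels n)"
  then obtain u v where uv: "a = cls n u" "b = cls n v" using in_carrier by metis
  assume "R_le (pres_carrier (rels n)) (pres_mul (rels n)) a b"
  then have 1: "ev n u = ev n v \<or> (\<exists>w. ev n u = runw n (ev n v) w)" using uv R_le_S[OF n2] by simp
  assume "hS n (Phi n a) = hS n (Phi n b)"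
  then have heq: "hS n (ev n u) = hS n (ev n v)" using uv Phi_cls[OF n2] by simp
  have "ev n v = ev n u \<or> (\<exists>w. ev n v = runw n (ev n u) w)"
  proof (cases "ev n u = ev n v")
    case False
    then obtain w where w: "ev n u = runw n (ev n v) w" using 1 by blast
    have "ev n v = None \<or> (\<exists>s s'. ev n v = Some s \<and> ev n u = Some s' \<and>
        (\<exists>w'. runl n (Some s') w' = ev n v))"
      using runw_h[OF n2 reach_ev, of v w] heq w by auto
    then show ?thesis
    proof
      assume "ev n v = None"
      then show ?thesis using w by simp
    next
      assume "\<exists>s s'. ev n v = Some s \<and> ev n u = Some s' \<and> (\<exists>w'. runl n (Some s') w' = ev n v)"
      then obtain s' w' where sw: "ev n u = Some s'" "runl n (Some s') w' = ev n v" by blast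
      show ?thesis
      proof (cases "w' = []")
        case True then show ?thesis using sw by simp
      next
        case False then show ?thesis using sw runw_wd[OF False, of n "Some s'"] by metis
      qed
    qed
  qed simp
  then show "R_le (pres_carrier (rels n)) (pres_mul (rels n)) b a" using uv R_le_S[OF n2] by simp
qed

lemma ev_xk: "1 \<le> k \<Longrightarrow> ev n (wd (replicate k X)) = (if k \<le> n - 1 then Some (PN, k, False) else None)"
proof -
  assume k: "1 \<le> k"
  then obtain j where j: "k = Suc j" by (cases k) auto
  have "ev n (wd (replicate k X)) = runl n (Some E) (replicate (Suc j) X)"
    unfolding ev_def j by simp
  then show ?thesis using runX[of n PN 0 j] j by (simp add: E_def bnd_def)
qed

lemma wd_xk_snoc: "1 \<le> j \<Longrightarrow> wd (replicate (Suc j) X) = fmul (wd (replicate j X)) (wd [X])"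
  using fmul_wd[of "replicate j X" "[X]"] by (simp add: replicate_append_same)

lemma S_lower: assumes n2: "2 \<le> n"
  shows "enat n \<le> R_height (pres_carrier (rels n)) (pres_mul (rels n))"
proof (rule R_height_ge[where h = "\<lambda>K. hS n (Phi n K)" and f = "\<lambda>k. cls n (wd (replicate k X))"])
  fix a b c
  show "a \<in> pres_carrier (rels n) \<Longrightarrow> b \<in> pres_carrier (rels n) \<Longrightarrow> c \<in> pres_carrier (rels n) \<Longrightarrow>
    R_le (pres_carrier (rels n)) (pres_mul (rels n)) a b \<Longrightarrow>
    R_le (pres_carrier (rels n)) (pres_mul (rels n)) b c \<Longrightarrow>
    R_le (pres_carrier (rels n)) (pres_mul (rels n)) a c" by (rule S_trans[OF n2])
next
  fix a b assume "a \<in> pres_carrier (rels n)" "b \<in> pres_carrier (rels n)"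
  then obtain u v where uv: "a = cls n u" "b = cls n v" using in_carrier by metis
  assume "R_le (pres_carrier (rels n)) (pres_mul (rels n)) a b"
  then have 1: "ev n u = ev n v \<or> (\<exists>w. ev n u = runw n (ev n v) w)" using uv R_le_S[OF n2] by simp
  then show "hS n (Phi n a) \<le> hS n (Phi n b)"
    using uv Phi_cls[OF n2] runw_h[OF n2 reach_ev] by auto
next
  fix k show "cls n (wd (replicate k X)) \<in> pres_carrier (rels n)" unfolding carrier_eq by simp
next
  fix j assume j: "1 \<le> j" "j < n"
  have "cls n (wd (replicate (Suc j) X)) = pres_mul (rels n) (cls n (wd (replicate j X))) (cls n (wd [X]))"
    using wd_xk_snoc[OF j(1)] pres_mul_cls by simp
  then show "R_le (pres_carrier (rels n)) (pres_mul (rels n)) (cls n (wd (replicate (Suc j) X))) (cls n (wd (replicate j X)))"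
    unfolding R_le_def carrier_eq by blast
next
  have "hS n (Phi n (cls n (wd (replicate k X)))) = n - k" if "k \<in> {1..n}" for k
  proof -
    have k: "1 \<le> k" "k \<le> n" using that by auto
    show ?thesis using Phi_cls[OF n2] ev_xk[OF k(1), of n] k n2 by (auto simp: bnd_def)
  qed
  then show "inj_on (\<lambda>k. hS n (Phi n (cls n (wd (replicate k X))))) {1..n}"
    unfolding inj_on_def by (metis atLeastAtMost_iff diff_diff_cancel)
qed

lemma S_height: "2 \<le> n \<Longrightarrow> R_height (pres_carrier (rels n)) (pres_mul (rels n)) = enat n"
  using S_upper S_lower by (metis antisym)

definition inA :: "gen fsz \<Rightarrow> bool" where
  "inA w = (\<exists>L. (L = X \<or> L = Y) \<and> (w = wd [L] \<or> (\<exists>u. w = fmul u (wd [L]))))"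

lemma A_eq: "left_ideal_xy n = cls n ` {w. inA w}"
proof -
  have pe: "pres_elem (rels n) w = cls n w" for w unfolding pres_elem_def cls_def by simp
  show ?thesis
  proof
    show "left_ideal_xy n \<subseteq> cls n ` {w. inA w}"
    proof
      fix K assume "K \<in> left_ideal_xy n"
      then consider "K = cls n (wd [X])" | "K = cls n (wd [Y])" |
         s L where "s \<in> pres_carrier (rels n)" "L = X \<or> L = Y" "K = pres_mul (rels n) s (cls n (wd [L]))"
        unfolding left_ideal_xy_def Let_def pe by blast
      then show "K \<in> cls n ` {w. inA w}"
      proof cases
        case 1 then show ?thesis unfolding inA_def by blast
      next
        case 2 then show ?thesis unfolding inA_def by blast
      next
        case (3 s L)
        note a = 3
        obtain u where "s = cls n u" using in_carrier a(1) by blast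
        then have "K = cls n (fmul u (wd [L]))" using a pres_mul_cls by simp
        moreover have "inA (fmul u (wd [L]))" unfolding inA_def using a by blast
        ultimately show ?thesis by blast
      qed
    qed
  next
    show "cls n ` {w. inA w} \<subseteq> left_ideal_xy n"
    proof
      fix K assume "K \<in> cls n ` {w. inA w}"
      then obtain w L where w: "K = cls n w" "L = X \<or> L = Y" "w = wd [L] \<or> (\<exists>u. w = fmul u (wd [L]))"
        unfolding inA_def by blast
      show "K \<in> left_ideal_xy n"
      proof (cases "w = wd [L]")
        case True then show ?thesis using w unfolding left_ideal_xy_def Let_def pe by auto
      next
        case False
        then obtain u where u: "w = fmul u (wd [L])" using w by blast
        have "K = pres_mul (rels n) (cls n u) (cls n (wd [L]))" using u w pres_mul_cls by simp
        moreover have "cls n u \<in> pres_carrier (rels n)" unfolding carrier_eq by simp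
        ultimately show ?thesis using w(2) unfolding left_ideal_xy_def Let_def pe by blast
      qed
    qed
  qed
qed

lemma in_A: "K \<in> left_ideal_xy n \<Longrightarrow> \<exists>u. K = cls n u \<and> inA u"
  unfolding A_eq by blast

lemma R_le_A: assumes n2: "2 \<le> n"
  shows "R_le (left_ideal_xy n) (pres_mul (rels n)) (cls n u) (cls n v) \<longleftrightarrow>
     (ev n u = ev n v \<or> (\<exists>w. inA w \<and> ev n u = runw n (ev n v) w))"
proof -
  have "(\<exists>c\<in>left_ideal_xy n. cls n u = pres_mul (rels n) (cls n v) c) \<longleftrightarrow>
        (\<exists>w. inA w \<and> ev n u = runw n (ev n v) w)"
    unfolding A_eq using pres_mul_cls cls_eq[OF n2] ev_fmul by auto
  then show ?thesis unfolding R_le_def using cls_eq[OF n2] by blast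
qed

lemma inA_fmul: "inA w1 \<Longrightarrow> inA (fmul w2 w1)"
  unfolding inA_def by (metis fmul_assoc)

lemma A_trans: assumes n2: "2 \<le> n"
  shows "a \<in> left_ideal_xy n \<Longrightarrow> b \<in> left_ideal_xy n \<Longrightarrow> c \<in> left_ideal_xy n \<Longrightarrow>
    R_le (left_ideal_xy n) (pres_mul (rels n)) a b \<Longrightarrow>
    R_le (left_ideal_xy n) (pres_mul (rels n)) b c \<Longrightarrow>
    R_le (left_ideal_xy n) (pres_mul (rels n)) a c"
proof -
  assume "a \<in> left_ideal_xy n" "b \<in> left_ideal_xy n" "c \<in> left_ideal_xy n"
  then obtain u v x where uvx: "a = cls n u" "b = cls n v" "c = cls n x" using in_A by metis
  assume ab: "R_le (left_ideal_xy n) (pres_mul (rels n)) a b"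
     and bc: "R_le (left_ideal_xy n) (pres_mul (rels n)) b c"
  have 1: "ev n u = ev n v \<or> (\<exists>w. inA w \<and> ev n u = runw n (ev n v) w)" using ab uvx R_le_A[OF n2] by simp
  have 2: "ev n v = ev n x \<or> (\<exists>w. inA w \<and> ev n v = runw n (ev n x) w)" using bc uvx R_le_A[OF n2] by simp
  have "ev n u = ev n x \<or> (\<exists>w. inA w \<and> ev n u = runw n (ev n x) w)"
    using 1 2 by (metis runw_fmul inA_fmul)
  then show ?thesis using uvx R_le_A[OF n2] by simp
qed

fun hA :: "nat \<Rightarrow> st option \<Rightarrow> nat" where
  "hA n None = 0"
| "hA n (Some (P,b,y)) = 2 * hS n (Some (P,b,y)) - (if y \<or> b = 0 then 1 else 0)"

fun okA :: "st option \<Rightarrow> bool" where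
  "okA None = True"
| "okA (Some (P,b,y)) = (y \<or> 1 \<le> b)"

lemma act_okA: "L = X \<or> L = Y \<Longrightarrow> okA (act n s L)"
proof -
  assume L: "L = X \<or> L = Y"
  obtain P b y where st: "s = (P,b,y)" by (cases s) auto
  show ?thesis using L st by (cases y) auto
qed

lemma actO_okA: "L = X \<or> L = Y \<Longrightarrow> okA (actO n t L)"
  using act_okA by (cases t) auto

lemma okA_ev: "inA w \<Longrightarrow> okA (ev n w)"
proof -
  assume "inA w"
  then obtain L where L: "L = X \<or> L = Y" "w = wd [L] \<or> (\<exists>u. w = fmul u (wd [L]))" unfolding inA_def by blast
  from L(2) show ?thesis
  proof
    assume "w = wd [L]" then show ?thesis using actO_okA[OF L(1), of n "Some E"] by (simp add: ev_def)
  next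
    assume "\<exists>u. w = fmul u (wd [L])"
    then obtain u where "w = fmul u (wd [L])" by blast
    then show ?thesis using actO_okA[OF L(1)] by (simp add: ev_fmul)
  qed
qed

lemma reach_runw: assumes r: "reach n t" shows "reach n (runw n t w)"
proof (cases w)
  case Zero then show ?thesis by (simp add: reach_def)
next
  case (Word a us) then show ?thesis using reach_runl[OF reach_act[OF r]] by simp
qed

lemma hA_le: "hA n t \<le> 2 * hS n t"
proof (cases t)
  case (Some s)
  obtain P b y where st: "s = (P,b,y)" by (cases s) auto
  show ?thesis using Some st by simp
qed simp

lemma hA_ge: "2 * hS n (Some s) - 1 \<le> hA n (Some s)"
  by (cases s) auto

lemma act_Y_y: "act n s Y = Some (P,b,y) \<Longrightarrow> y"
  by (cases s) (auto split: if_splits elim: act.elims)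

lemma key_inj: "wfs n (P,b,True) \<Longrightarrow> wfs n (P',b',True) \<Longrightarrow> keyf (P,b,True) = keyf (P',b',True) \<Longrightarrow> P = P' \<and> b = b'"
  by (cases P; cases P') (auto split: if_splits)

lemma A_pre:
  assumes n2: "2 \<le> n" and rb: "reach n b0" and w: "inA w"
  shows "\<exists>L u0. (L = X \<or> L = Y) \<and> runw n b0 w = actO n u0 L \<and> reach n u0 \<and> hS n u0 \<le> hS n b0 \<and>
     (hS n u0 = hS n b0 \<longrightarrow> b0 = None \<or> (\<exists>s s'. b0 = Some s \<and> u0 = Some s' \<and> keyf s' = keyf s))"
proof -
  obtain L where L: "L = X \<or> L = Y" "w = wd [L] \<or> (\<exists>u. w = fmul u (wd [L]))" using w unfolding inA_def by blast
  from L(2) show ?thesis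
  proof
    assume "w = wd [L]"
    then have "runw n b0 w = actO n b0 L" by simp
    moreover have "hS n b0 = hS n b0 \<longrightarrow> b0 = None \<or> (\<exists>s s'. b0 = Some s \<and> b0 = Some s' \<and> keyf s' = keyf s)"
      by (cases b0) auto
    ultimately show ?thesis using L(1) rb by blast
  next
    assume "\<exists>u. w = fmul u (wd [L])"
    then obtain u where u: "w = fmul u (wd [L])" by blast
    have "runw n b0 w = actO n (runw n b0 u) L" using u by (simp add: runw_fmul)
    moreover have "reach n (runw n b0 u)" using reach_runw[OF rb] .
    moreover have "hS n (runw n b0 u) \<le> hS n b0 \<and> (hS n (runw n b0 u) = hS n b0 \<longrightarrow>
       b0 = None \<or> (\<exists>s s'. b0 = Some s \<and> runw n b0 u = Some s' \<and> keyf s' = keyf s))"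
      using runw_h[OF n2 rb, of u] by blast
    ultimately show ?thesis using L(1) by blast
  qed
qed

lemma A_step:
  assumes n2: "2 \<le> n" and rb: "reach n b0" and ok: "okA b0" and w: "inA w"
  shows "hA n (runw n b0 w) \<le> hA n b0 \<and> (hA n (runw n b0 w) = hA n b0 \<longrightarrow> runw n b0 w = b0)"
proof -
  obtain L u0 where L: "L = X \<or> L = Y" and a0: "runw n b0 w = actO n u0 L" and ru: "reach n u0"
    and hu: "hS n u0 \<le> hS n b0"
    and hk: "hS n u0 = hS n b0 \<longrightarrow> b0 = None \<or> (\<exists>s s'. b0 = Some s \<and> u0 = Some s' \<and> keyf s' = keyf s)"
    using A_pre[OF n2 rb w] by blast
  show ?thesis
  proof (cases b0)
    case None
    then have "u0 = None"
    proof -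
      have "hS n u0 = 0" using hu None by simp
      then show ?thesis using ru hS_pos[OF n2] unfolding reach_def by fastforce
    qed
    then show ?thesis using a0 None by simp
  next
    case (Some sb)
    have sbw: "wfs n sb" "sb \<noteq> E" using rb Some unfolding reach_def by auto
    have hb1: "1 \<le> hS n b0" using hS_pos[OF n2 sbw(1)] Some by simp
    have hAb: "2 * hS n b0 - 1 \<le> hA n b0" using hA_ge Some by simp
    show ?thesis
    proof (cases u0)
      case None
      then have "hA n (runw n b0 w) = 0" using a0 by simp
      then show ?thesis using hAb hb1 by linarith
    next
      case (Some su)
      have suw: "wfs n su" "su \<noteq> E" using ru Some unfolding reach_def by auto
      have st: "hS n (act n su L) \<le> hS n (Some su) \<and>
        (hS n (act n su L) = hS n (Some su) \<longrightarrow> L \<noteq> X \<and> act n su L \<noteq> None \<and>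
          keyf (the (act n su L)) = keyf su \<and> act n (the (act n su L)) (rl L) = Some su)"
        using step_h0[OF n2 suw] .
      have a0': "runw n b0 w = act n su L" using a0 Some by simp
      have ha: "hS n (runw n b0 w) \<le> hS n b0" using st hu a0' Some by auto
      show ?thesis
      proof (cases "hS n (runw n b0 w) < hS n b0")
        case True
        have "hA n (runw n b0 w) \<le> 2 * hS n (runw n b0 w)" by (rule hA_le)
        then show ?thesis using True hAb by linarith
      next
        case False
        then have eqh: "hS n (runw n b0 w) = hS n b0" using ha by linarith
        then have e1: "hS n u0 = hS n b0" using st hu a0' Some by auto
        then have ks: "keyf su = keyf sb" using hk Some \<open>b0 = Some sb\<close> by auto
        have e2: "hS n (act n su L) = hS n (Some su)" using eqh e1 a0' Some by simp
        then have LY: "L = Y" and nn: "act n su L \<noteq> None" and ka: "keyf (the (act n su L)) = keyf su"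
          using st L by auto
        then obtain sa where sa: "act n su Y = Some sa" by auto
        obtain Pa ba ya where sa3: "sa = (Pa, ba, ya)" by (cases sa) auto
        have ya: "ya" using act_Y_y sa sa3 by blast
        have saw: "wfs n sa" using act_wf[OF suw(1) sa] by blast
        have hAa: "hA n (runw n b0 w) = 2 * hS n (runw n b0 w) - 1" using a0' LY sa sa3 ya by simp
        have le: "hA n (runw n b0 w) \<le> hA n b0" using hAa hAb eqh by linarith
        moreover have "runw n b0 w = b0" if hh: "hA n (runw n b0 w) = hA n b0"
        proof -
          obtain Pb bb yb where sb3: "sb = (Pb, bb, yb)" by (cases sb) auto
          have "hA n b0 = 2 * hS n b0 - 1" using hh hAa eqh by simp
          then have "yb \<or> bb = 0" using hb1 \<open>b0 = Some sb\<close> sb3 by (auto split: if_splits)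
          then have yb: "yb" using ok \<open>b0 = Some sb\<close> sb3 by auto
          have "keyf (Pa,ba,True) = keyf (Pb,bb,True)" using ka ks LY sa sa3 sb3 ya yb by simp
          moreover have "wfs n (Pa,ba,True)" "wfs n (Pb,bb,True)" using saw sbw(1) sa3 sb3 ya yb by auto
          ultimately have "Pa = Pb \<and> ba = bb" using key_inj by blast
          then show ?thesis using a0' LY sa sa3 sb3 ya yb \<open>b0 = Some sb\<close> by simp
        qed
        ultimately show ?thesis by blast
      qed
    qed
  qed
qed

lemma A_upper: assumes n2: "2 \<le> n"
  shows "R_height (left_ideal_xy n) (pres_mul (rels n)) \<le> enat (2 * n - 1)"
proof (rule R_height_le[where h = "\<lambda>K. hA n (Phi n K)"])
  fix a b c
  show "a \<in> left_ideal_xy n \<Longrightarrow> b \<in> left_ideal_xy n \<Longrightarrow> c \<in> left_ideal_xy n \<Longrightarrow>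
    R_le (left_ideal_xy n) (pres_mul (rels n)) a b \<Longrightarrow>
    R_le (left_ideal_xy n) (pres_mul (rels n)) b c \<Longrightarrow>
    R_le (left_ideal_xy n) (pres_mul (rels n)) a c" by (rule A_trans[OF n2])
next
  fix a assume "a \<in> left_ideal_xy n"
  then obtain u where u: "a = cls n u" using in_A by blast
  have "hS n (ev n u) < n" using hS_lt[OF n2 reach_ev] .
  moreover have "hA n (ev n u) \<le> 2 * hS n (ev n u)" by (rule hA_le)
  ultimately show "hA n (Phi n a) < 2 * n - 1" using u Phi_cls[OF n2] by simp
next
  fix a b assume "a \<in> left_ideal_xy n" "b \<in> left_ideal_xy n"
  then obtain u v where uv: "a = cls n u" "b = cls n v" "inA v" using in_A by metis
  assume "R_le (left_ideal_xy n) (pres_mul (rels n)) a b"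
  then have 1: "ev n u = ev n v \<or> (\<exists>w. inA w \<and> ev n u = runw n (ev n v) w)" using uv R_le_A[OF n2] by simp
  then show "hA n (Phi n a) \<le> hA n (Phi n b)"
    using uv Phi_cls[OF n2] A_step[OF n2 reach_ev okA_ev[OF uv(3)]] by auto
next
  fix a b assume "a \<in> left_ideal_xy n" "b \<in> left_ideal_xy n"
  then obtain u v where uv: "a = cls n u" "b = cls n v" "inA v" using in_A by metis
  assume "R_le (left_ideal_xy n) (pres_mul (rels n)) a b"
  then have 1: "ev n u = ev n v \<or> (\<exists>w. inA w \<and> ev n u = runw n (ev n v) w)" using uv R_le_A[OF n2] by simp
  assume "hA n (Phi n a) = hA n (Phi n b)"
  then have heq: "hA n (ev n u) = hA n (ev n v)" using uv Phi_cls[OF n2] by simp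
  have "ev n u = ev n v" using 1 heq A_step[OF n2 reach_ev okA_ev[OF uv(3)]] by auto
  then have "a = b" using uv cls_eq[OF n2] by simp
  then show "R_le (left_ideal_xy n) (pres_mul (rels n)) b a" unfolding R_le_def by simp
qed

definition gA :: "nat \<Rightarrow> gen list" where
  "gA k = replicate ((k + 1) div 2) X @ (if even k then [Y] else [])"

lemma inA_snoc: "L = X \<or> L = Y \<Longrightarrow> inA (wd (l @ [L]))"
proof (cases "l = []")
  case True
  assume "L = X \<or> L = Y" then show ?thesis using True unfolding inA_def by auto
next
  case False
  assume L: "L = X \<or> L = Y"
  have "wd (l @ [L]) = fmul (wd l) (wd [L])" using False fmul_wd[of l "[L]"] by simp
  then show ?thesis using L unfolding inA_def by blast
qed

lemma rep_snoc: "replicate (Suc m) X = replicate m X @ [X]"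
  by (simp add: replicate_append_same)

lemma rep_snoc2: "replicate (Suc (Suc m)) X = replicate m X @ [X, X]"
  by (induction m) auto

lemma gA_even: "gA (2 * a) = replicate a X @ [Y]"
  unfolding gA_def by simp

lemma gA_odd: "gA (2 * a + 1) = replicate (Suc a) X"
  unfolding gA_def by simp

lemma ev_wd: "l \<noteq> [] \<Longrightarrow> ev n (wd l) = runl n (Some E) l"
  unfolding ev_def by (rule runw_wd)

lemma hA_gA: assumes n2: "2 \<le> n" and k: "k \<in> {1..2*n-1}"
  shows "hA n (ev n (wd (gA k))) = 2 * n - 1 - k"
proof (cases "even k")
  case True
  then obtain a where a: "k = 2 * a" by blast
  have a1: "1 \<le> a" "a \<le> n - 1" using k a by auto
  have ne: "replicate a X \<noteq> []" using a1 by simp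
  have "wd (replicate a X @ [Y]) = fmul (wd (replicate a X)) (wd [Y])" using fmul_wd[OF ne, of "[Y]"] by simp
  then have "ev n (wd (gA k)) = runw n (ev n (wd (replicate a X))) (wd [Y])"
    unfolding a gA_even by (simp add: ev_fmul)
  also have "\<dots> = Some (PN, a, True)" using ev_xk[OF a1(1), of n] a1 by simp
  finally show ?thesis using a a1 n2 by (simp add: bnd_def)
next
  case False
  then obtain a where a: "k = 2 * a + 1" using oddE by blast
  have a1: "a + 1 \<le> n" using k a by auto
  have "ev n (wd (gA k)) = ev n (wd (replicate (Suc a) X))" unfolding a gA_odd by simp
  also have "\<dots> = (if Suc a \<le> n - 1 then Some (PN, Suc a, False) else None)" using ev_xk[of "Suc a" n] by simp
  finally show ?thesis using a a1 n2 by (auto simp: bnd_def)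
qed

lemma A_lower: assumes n2: "2 \<le> n"
  shows "enat (2 * n - 1) \<le> R_height (left_ideal_xy n) (pres_mul (rels n))"
proof (rule R_height_ge[where h = "\<lambda>K. hA n (Phi n K)" and f = "\<lambda>k. cls n (wd (gA k))"])
  fix a b c
  show "a \<in> left_ideal_xy n \<Longrightarrow> b \<in> left_ideal_xy n \<Longrightarrow> c \<in> left_ideal_xy n \<Longrightarrow>
    R_le (left_ideal_xy n) (pres_mul (rels n)) a b \<Longrightarrow>
    R_le (left_ideal_xy n) (pres_mul (rels n)) b c \<Longrightarrow>
    R_le (left_ideal_xy n) (pres_mul (rels n)) a c" by (rule A_trans[OF n2])
next
  fix a b assume "a \<in> left_ideal_xy n" "b \<in> left_ideal_xy n"
  then obtain u v where uv: "a = cls n u" "b = cls n v" "inA v" using in_A by metis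
  assume "R_le (left_ideal_xy n) (pres_mul (rels n)) a b"
  then have 1: "ev n u = ev n v \<or> (\<exists>w. inA w \<and> ev n u = runw n (ev n v) w)" using uv R_le_A[OF n2] by simp
  then show "hA n (Phi n a) \<le> hA n (Phi n b)"
    using uv Phi_cls[OF n2] A_step[OF n2 reach_ev okA_ev[OF uv(3)]] by auto
next
  fix k assume k: "k \<in> {1..2 * n - 1}"
  have "inA (wd (gA k))"
  proof (cases "even k")
    case True
    then obtain a where a: "k = 2 * a" by blast
    show ?thesis unfolding a gA_even by (rule inA_snoc) simp
  next
    case False
    then obtain a where a: "k = 2 * a + 1" using oddE by blast
    show ?thesis unfolding a gA_odd rep_snoc by (rule inA_snoc) simp
  qed
  then show "cls n (wd (gA k)) \<in> left_ideal_xy n" unfolding A_eq by blast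
next
  fix j assume j: "1 \<le> j" "j < 2 * n - 1"
  have "\<exists>w. inA w \<and> ev n (wd (gA (Suc j))) = runw n (ev n (wd (gA j))) w"
  proof (cases "even j")
    case False
    then obtain a where a: "j = 2 * a + 1" using oddE by blast
    have sj: "Suc j = 2 * Suc a" using a by simp
    have e: "wd (replicate (Suc a) X @ [Y]) = fmul (wd (replicate (Suc a) X)) (wd [Y])"
      using fmul_wd[of "replicate (Suc a) X" "[Y]"] by simp
    have "ev n (wd (gA (Suc j))) = runw n (ev n (wd (gA j))) (wd [Y])"
    proof -
      have g1: "gA (Suc j) = replicate (Suc a) X @ [Y]" unfolding sj by (rule gA_even)
      have g2: "gA j = replicate (Suc a) X" using a gA_odd by simp
      show ?thesis unfolding g1 g2 e by (rule ev_fmul)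
    qed
    moreover have "inA (wd [Y])" unfolding inA_def by auto
    ultimately show ?thesis by blast
  next
    case True
    then obtain a where a: "j = 2 * a" by blast
    then obtain m where m: "a = Suc m" using j by (cases a) auto
    have sj: "Suc j = 2 * Suc m + 1" using a m by simp
    have "runw n (ev n (wd (gA j))) (wd [Z, X]) = ev n (fmul (wd (gA j)) (wd [Z, X]))"
      by (simp add: ev_fmul)
    also have "\<dots> = ev n (wd (replicate m X @ [X,Y,Z] @ [X]))"
    proof -
      have g: "gA j = replicate m X @ [X, Y]" unfolding a m gA_even rep_snoc by simp
      have "fmul (wd (replicate m X @ [X, Y])) (wd [Z, X]) = wd (replicate m X @ [X, Y] @ [Z, X])"
        using fmul_wd[of "replicate m X @ [X, Y]" "[Z, X]"] by simp
      then show ?thesis unfolding g by simp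
    qed
    also have "\<dots> = runl n (runl n (runl n (Some E) (replicate m X)) [X,Y,Z]) [X]"
      using ev_wd[of "replicate m X @ [X,Y,Z] @ [X]" n] by (simp only: runl_append) simp
    also have "\<dots> = runl n (runl n (runl n (Some E) (replicate m X)) [X]) [X]"
      by (simp only: inv_xyz)
    also have "\<dots> = ev n (wd (gA (Suc j)))"
      unfolding sj gA_odd rep_snoc2 using ev_wd[of "replicate m X @ [X,X]" n] by (simp only: runl_append) simp
    finally have "ev n (wd (gA (Suc j))) = runw n (ev n (wd (gA j))) (wd [Z, X])" by simp
    moreover have "inA (wd [Z, X])" using inA_snoc[of X "[Z]"] by simp
    ultimately show ?thesis by blast
  qed
  then show "R_le (left_ideal_xy n) (pres_mul (rels n)) (cls n (wd (gA (Suc j)))) (cls n (wd (gA j)))"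
    using R_le_A[OF n2] by blast
next
  have "hA n (Phi n (cls n (wd (gA k)))) = 2 * n - 1 - k" if "k \<in> {1..2 * n - 1}" for k
    using Phi_cls[OF n2] hA_gA[OF n2 that] by simp
  then show "inj_on (\<lambda>k. hA n (Phi n (cls n (wd (gA k))))) {1..2 * n - 1}"
    unfolding inj_on_def by (metis atLeastAtMost_iff diff_diff_cancel)
qed

theorem theorem4p10:
  fixes n :: nat
  assumes "n \<ge> 2"
  shows "finite (pres_carrier (rels n))
       \<and> R_height (pres_carrier (rels n)) (pres_mul (rels n)) = enat n
       \<and> R_height (left_ideal_xy n) (pres_mul (rels n)) = enat (2 * n - 1)"
  using finite_carrier[OF assms] S_height[OF assms] A_upper[OF assms] A_lower[OF assms]
  by (simp add: antisym)

end
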